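(* For $k\ge0$ write $3^k=\sum_{i\ge0}\omega_i(k)2^i$ with $\omega_i(k)\in\{0,1\}$ (the binary expansion), and let $A_k=\{i\ge0:\omega_i(k)=1\}$. Let \[ W=\{k\in\mathbb{N}: A_k \text{ contains no 3-term arithmetic progression}\}. \] Then for every $\varepsilon>0$, $\#(W\cap[1,N])=O_\varepsilon(N^{\varepsilon})$.
   Context: A 3-term arithmetic progression in a set $A$ of integers means $a,a+d,a+2d\in A$ with $d\ge1$. *)

theory Defs
  imports Complex_Main
begin

definition omega :: "nat \<Rightarrow> nat \<Rightarrow> nat" where
  "omega i k = (3 ^ k div 2 ^ i) mod 2"

definition A_set :: "nat \<Rightarrow> nat set" where
  "A_set k = {i. omega i k = 1}"

definition has_3AP :: "nat set \<Rightarrow> bool" where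
  "has_3AP A \<longleftrightarrow> (\<exists>a d. d \<ge> 1 \<and> a \<in> A \<and> a + d \<in> A \<and> a + 2 * d \<in> A)"

definition W_set :: "nat set" where
  "W_set = {k. \<not> has_3AP (A_set k)}"

end

theory Submission
  imports Defs
begin


lemma pow3_two_pow: "\<exists>w. odd w \<and> (3::nat)^(2^(a+1)) = 1 + 2^(a+3) * w"
proof (induction a)
  case 0 show ?case by (rule exI[of _ 1]) simp
next
  case (Suc a)
  then obtain w where w: "odd w" "(3::nat)^(2^(a+1)) = 1 + 2^(a+3) * w" by blast
  have "(3::nat)^(2^(Suc a+1)) = (3^(2^(a+1)))^2"
    by (simp add: power_mult[symmetric] mult.commute)
  also have "\<dots> = (1 + 2^(a+3)*w)^2" using w by simp
  also have "\<dots> = 1 + 2^(Suc a+3) * (w + 2^(a+2)*w^2)"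
    by (simp add: power2_eq_square algebra_simps power_add)
  finally show ?case using w(1) by (intro exI[of _ "w + 2^(a+2)*w^2"]) auto
qed

lemma pow_expand:
  assumes "b \<ge> 1"
  shows "\<exists>r. ((1::nat) + 2^b*w)^u = 1 + u*2^b*w + 2^(b+1)*r"
proof (induction u)
  case 0 show ?case by simp
next
  case (Suc u)
  then obtain r where r: "((1::nat) + 2^b*w)^u = 1 + u*2^b*w + 2^(b+1)*r" by blast
  obtain c where c: "b = Suc c" using assms by (cases b) auto
  have "((1::nat) + 2^b*w)^Suc u = (1 + u*2^b*w + 2^(b+1)*r) * (1 + 2^b*w)" using r by simp
  also have "\<dots> = 1 + Suc u*2^b*w + 2^(b+1)*(r + u*w*w*2^c + 2^b*r*w)"
    by (simp add: c algebra_simps power_add)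
  finally show ?case by blast
qed

lemma not_dvd_pow:
  assumes "b \<ge> 1" "odd w" "odd u"
  shows "\<not> 2^(b+1) dvd ((1::nat) + 2^b*w)^u - 1"
proof
  assume h: "2^(b+1) dvd ((1::nat) + 2^b*w)^u - 1"
  obtain r where r: "((1::nat) + 2^b*w)^u = 1 + u*2^b*w + 2^(b+1)*r"
    using pow_expand[OF assms(1)] by blast
  have "2^(b+1) dvd u*w*2^b + 2^(b+1)*r" using h r by (simp add: mult.commute mult.left_commute)
  hence "2^(b+1) dvd u*w*2^b" by (simp add: dvd_add_left_iff)
  hence "2^b * 2 dvd 2^b * (u*w)" by (simp add: mult.commute)
  hence "2 dvd u*w" using nat_mult_dvd_cancel1[of "2^b" 2 "u*w"] by simp
  with assms show False by simp
qed

lemma three_order: "2^(m+2) dvd (3::nat)^j - 1 \<Longrightarrow> 2^m dvd j"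
proof (induction m arbitrary: j)
  case 0 show ?case by simp
next
  case (Suc m)
  have "2^(m+2) dvd (3::nat)^j - 1"
    using Suc.prems by (rule dvd_trans[rotated]) (simp add: le_imp_power_dvd)
  then have "2^m dvd j" using Suc.IH by blast
  then obtain u where u: "j = 2^m * u" by blast
  show ?case
  proof (cases "even u")
    case True then show ?thesis using u by auto
  next
    case False
    have j: "(3::nat)^j = (3^(2^m))^u" using u by (simp add: power_mult)
    show ?thesis
    proof (cases m)
      case 0
      have e3: "(1::nat) + 2^1*1 = 3" by simp
      have "\<not> 2^(1+1) dvd (3::nat)^u - 1" using not_dvd_pow[of 1 1 u, unfolded e3] False by simp
      moreover have "(2::nat)^(1+1) dvd 2^(Suc m + 2)" using 0 by simp
      hence "2^(1+1) dvd (3::nat)^j - 1"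
        using Suc.prems by (rule dvd_trans)
      ultimately show ?thesis using j 0 by (simp only: power_one_right power_0 mult_1)
    next
      case (Suc a)
      obtain w where w: "odd w" "(3::nat)^(2^(a+1)) = 1 + 2^(a+3) * w" using pow3_two_pow by blast
      have "\<not> 2^(a+3+1) dvd ((1::nat) + 2^(a+3)*w)^u - 1" using not_dvd_pow[of "a+3" w u] False w by simp
      moreover have "2^(a+3+1) dvd (3::nat)^j - 1" using Suc.prems Suc by (simp add: power_add mult.commute)
      moreover have "(3::nat)^(2^m) = 1 + 2^(a+3)*w" using w(2) Suc by simp
      ultimately have False using j by simp
      then show ?thesis ..
    qed
  qed
qed

lemma omega_bit: "omega i k = 1 \<longleftrightarrow> bit ((3::nat)^k) i"
  unfolding omega_def bit_iff_odd odd_iff_mod_2_eq_one ..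

lemma pattern_inj:
  assumes "k < k'" "k' - k < 2^a"
    "A_set k \<inter> {0..<a+2} = A_set k' \<inter> {0..<a+2}"
  shows False
proof -
  let ?m = "a+2"
  have bits: "bit ((3::nat)^k) i = bit ((3::nat)^k') i" if "i < ?m" for i
  proof -
    have e: "(i \<in> A_set k \<inter> {0..<?m}) = (i \<in> A_set k' \<inter> {0..<?m})" by (simp only: assms(3))
    have "i \<in> A_set k \<longleftrightarrow> i \<in> A_set k'" using e that by simp
    then show ?thesis unfolding A_set_def mem_Collect_eq omega_bit .
  qed
  have "\<forall>n. bit (take_bit ?m ((3::nat)^k)) n = bit (take_bit ?m ((3::nat)^k')) n"
  proof
    fix n
    show "bit (take_bit ?m ((3::nat)^k)) n = bit (take_bit ?m ((3::nat)^k')) n"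
    proof (cases "n < ?m")
      case True then show ?thesis unfolding bit_take_bit_iff using bits[OF True] by (simp only: True simp_thms)
    next
      case False then show ?thesis unfolding bit_take_bit_iff by (simp only: False simp_thms)
    qed
  qed
  then have "take_bit ?m ((3::nat)^k) = take_bit ?m (3^k')" using bit_eq_iff by blast
  hence md: "(3::nat)^k' mod 2^?m = 3^k mod 2^?m" by (simp add: take_bit_eq_mod)
  have le: "(3::nat)^k \<le> 3^k'" using assms(1) by (intro power_increasing) auto
  from md have "2^?m dvd (3::nat)^k' - 3^k"
    by (rule iffD1[OF mod_eq_dvd_iff_nat[OF le]])
  moreover have eq: "(3::nat)^k' - 3^k = 3^k * (3^(k'-k) - 1)"
    using assms(1) by (simp add: diff_mult_distrib2 power_add[symmetric])
  ultimately have "2^?m dvd (3::nat)^k * (3^(k'-k) - 1)" by (simp only: eq)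
  moreover have "coprime ((2::nat)^?m) (3^k)"
  proof -
    have "coprime (2::nat) 3" unfolding numeral_3_eq_3 numeral_2_eq_2 by (rule coprime_Suc_right_nat)
    then show ?thesis by (simp only: coprime_power_left_iff coprime_power_right_iff simp_thms)
  qed
  ultimately have "2^?m dvd (3::nat)^(k'-k) - 1" using coprime_dvd_mult_right_iff by blast
  hence "2^a dvd k' - k" using three_order by simp
  moreover have "k' - k > 0" using assms by simp
  ultimately have "2^a \<le> k' - k" by (simp add: dvd_imp_le)
  with assms(2) show False by simp
qed



lemma card_filter_sum: "finite A \<Longrightarrow> card {x\<in>A. P x} = (\<Sum>x\<in>A. if P x then 1 else (0::nat))"
  by (simp add: sum.If_cases Int_def)

lemma ap_bound:
  assumes g: "\<forall>L\<ge>L0. \<forall>S. S \<subseteq> {0..<L} \<longrightarrow> \<not> has_3AP S \<longrightarrow> real (card S) \<le> \<beta> * real L"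
    and A: "\<not> has_3AP A" and s: "s \<ge> 1"
  shows "L \<ge> L0 \<Longrightarrow> real (card {t. t < L \<and> a + s*t \<in> A}) \<le> \<beta> * L"
    and "real (card {t. t < L \<and> a + s*t \<in> A}) \<le> L"
proof -
  let ?T = "{t. t < L \<and> a + s*t \<in> A}"
  have sub: "?T \<subseteq> {0..<L}" by auto
  have nT: "\<not> has_3AP ?T"
  proof
    assume "has_3AP ?T"
    then obtain x d where xd: "d \<ge> 1" "x \<in> ?T" "x + d \<in> ?T" "x + 2*d \<in> ?T" unfolding has_3AP_def by blast
    have "a + s*x \<in> A" "(a + s*x) + s*d \<in> A" "(a + s*x) + 2*(s*d) \<in> A"
      using xd by (auto simp: algebra_simps)
    moreover have "s*d \<ge> 1" using xd(1) s by simp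
    ultimately have "has_3AP A" unfolding has_3AP_def by blast
    with A show False by blast
  qed
  show "L \<ge> L0 \<Longrightarrow> real (card ?T) \<le> \<beta> * L" using g sub nT by blast
  have "card ?T \<le> card {0..<L}" by (rule card_mono[OF _ sub]) simp
  then show "real (card ?T) \<le> L" by simp
qed

lemma interval_bound:
  assumes g: "\<forall>L\<ge>L0. \<forall>S. S \<subseteq> {0..<L} \<longrightarrow> \<not> has_3AP S \<longrightarrow> real (card S) \<le> \<beta> * real L"
    and A: "\<not> has_3AP A" and b: "\<beta> \<ge> 0"
  shows "real (card (A \<inter> {a..<a+L})) \<le> \<beta> * L + L0"
proof -
  have e: "A \<inter> {a..<a+L} = (\<lambda>t. a + t) ` {t. t < L \<and> a + 1*t \<in> A}"
    by (auto simp: image_iff) (metis add_diff_inverse_nat add_less_cancel_left not_le)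
  have "card (A \<inter> {a..<a+L}) = card {t. t < L \<and> a + 1*t \<in> A}"
    unfolding e by (rule card_image) (simp add: inj_on_def)
  moreover have "real (card {t. t < L \<and> a + 1*t \<in> A}) \<le> \<beta> * L + L0"
  proof (cases "L \<ge> L0")
    case True then show ?thesis using ap_bound(1)[OF g A, of 1 L a] by simp
  next
    case False
    have "real (card {t. t < L \<and> a + 1*t \<in> A}) \<le> L" using ap_bound(2)[OF g A, of 1 L a] by simp
    moreover have "\<beta> * L \<ge> 0" using b by simp
    moreover have "real L \<le> L0" using False by simp
    ultimately show ?thesis by linarith
  qed
  ultimately show ?thesis by simp
qed

lemma chain_bound:
  assumes "finite D"
  shows "card {z\<in>D. z + t*s \<notin> D} \<le> t * card {z\<in>D. z + s \<notin> D}"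
proof (induction t)
  case 0 show ?case by simp
next
  case (Suc t)
  have "{z\<in>D. z + Suc t*s \<notin> D} \<subseteq> {z\<in>D. z + t*s \<notin> D} \<union> {z\<in>D. z + t*s \<in> D \<and> z + t*s + s \<notin> D}"
    by (auto simp: algebra_simps)
  then have "card {z\<in>D. z + Suc t*s \<notin> D} \<le> card ({z\<in>D. z + t*s \<notin> D} \<union> {z\<in>D. z + t*s \<in> D \<and> z + t*s + s \<notin> D})"
    by (rule card_mono[rotated]) (use assms in auto)
  also have "\<dots> \<le> card {z\<in>D. z + t*s \<notin> D} + card {z\<in>D. z + t*s \<in> D \<and> z + t*s + s \<notin> D}"
    by (rule card_Un_le)
  also have "card {z\<in>D. z + t*s \<in> D \<and> z + t*s + s \<notin> D} \<le> card {z\<in>D. z + s \<notin> D}"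
  proof -
    have "card {z\<in>D. z + t*s \<in> D \<and> z + t*s + s \<notin> D} = card ((\<lambda>z. z + t*s) ` {z\<in>D. z + t*s \<in> D \<and> z + t*s + s \<notin> D})"
      by (rule card_image[symmetric]) (simp add: inj_on_def)
    also have "\<dots> \<le> card {z\<in>D. z + s \<notin> D}"
      by (rule card_mono) (use assms in auto)
    finally show ?thesis .
  qed
  finally show ?case using Suc.IH by simp
qed

lemma sliding:
  fixes A D :: "nat set" and \<beta> :: real
  assumes A: "A \<subseteq> {0..<n}" and D: "D \<subseteq> {0..<n}" and AD: "A \<inter> D = {}"
    and l: "lw \<ge> 1" and b: "\<beta> \<ge> 0"
    and bound: "\<And>u. real (card {t. t < lw \<and> u + s*t \<in> A}) \<le> \<beta> * lw"
  shows "real (card A) \<le> \<beta> * (real n - card D) + lw * (s + card {z\<in>D. z + s \<notin> D})"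
proof -
  define U where "U = {0..<n} - D"
  define e where "e = card {z\<in>D. z + s \<notin> D}"
  have finD: "finite D" using D finite_subset by blast
  have finA: "finite A" using A finite_subset by blast
  have finU: "finite U" unfolding U_def by simp
  have cU: "card U = n - card D" unfolding U_def using D by (simp add: card_Diff_subset finD)
  have cD: "card D \<le> n" using D card_mono[of "{0..<n}" D] by simp
  have sw: "(\<Sum>u\<in>U. card {t\<in>{..<lw}. u + s*t \<in> A}) = (\<Sum>t<lw. card {u\<in>U. u + s*t \<in> A})"
  proof -
    have "(\<Sum>u\<in>U. card {t\<in>{..<lw}. u + s*t \<in> A}) = (\<Sum>u\<in>U. \<Sum>t<lw. if u + s*t \<in> A then 1 else 0)"
      by (intro sum.cong refl card_filter_sum) simp
    also have "\<dots> = (\<Sum>t<lw. \<Sum>u\<in>U. if u + s*t \<in> A then 1 else 0)" by (rule sum.swap)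
    also have "\<dots> = (\<Sum>t<lw. card {u\<in>U. u + s*t \<in> A})"
      by (intro sum.cong refl card_filter_sum[symmetric] finU)
    finally show ?thesis .
  qed
  have up: "real (\<Sum>u\<in>U. card {t\<in>{..<lw}. u + s*t \<in> A}) \<le> real (card U) * (\<beta> * lw)"
  proof -
    have "real (\<Sum>u\<in>U. card {t\<in>{..<lw}. u + s*t \<in> A}) = (\<Sum>u\<in>U. real (card {t. t < lw \<and> u + s*t \<in> A}))"
      by simp
    also have "\<dots> \<le> real (card U) * (\<beta> * lw)"
      by (rule sum_bounded_above) (rule bound)
    finally show ?thesis .
  qed
  have low: "card A \<le> card {u\<in>U. u + s*t \<in> A} + s*t + t*e" for t
  proof -
    have "A \<subseteq> (\<lambda>u. u + s*t) ` {u\<in>U. u + s*t \<in> A} \<union> {a\<in>A. a < s*t} \<union> (\<lambda>z. z + t*s) ` {z\<in>D. z + t*s \<notin> D}"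
    proof
      fix a assume a: "a \<in> A"
      show "a \<in> (\<lambda>u. u + s*t) ` {u\<in>U. u + s*t \<in> A} \<union> {a\<in>A. a < s*t} \<union> (\<lambda>z. z + t*s) ` {z\<in>D. z + t*s \<notin> D}"
      proof (cases "a < s*t")
        case True then show ?thesis using a by blast
      next
        case False
        define u where "u = a - s*t"
        have au: "a = u + s*t" using False unfolding u_def by simp
        have "u < n" using a A au by auto
        show ?thesis
        proof (cases "u \<in> D")
          case True
          have "u + t*s \<notin> D" using a AD au by (auto simp: mult.commute)
          then have "a \<in> (\<lambda>z. z + t*s) ` {z\<in>D. z + t*s \<notin> D}" using True au by (auto simp: mult.commute)
          then show ?thesis by blast
        next
          case False
          then have "u \<in> {u\<in>U. u + s*t \<in> A}" using \<open>u < n\<close> a au unfolding U_def by auto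
          then show ?thesis using au by blast
        qed
      qed
    qed
    then have "card A \<le> card ((\<lambda>u. u + s*t) ` {u\<in>U. u + s*t \<in> A} \<union> {a\<in>A. a < s*t} \<union> (\<lambda>z. z + t*s) ` {z\<in>D. z + t*s \<notin> D})"
      by (rule card_mono[rotated]) (use finU finD in auto)
    also have "\<dots> \<le> card ((\<lambda>u. u + s*t) ` {u\<in>U. u + s*t \<in> A}) + card {a\<in>A. a < s*t} + card ((\<lambda>z. z + t*s) ` {z\<in>D. z + t*s \<notin> D})"
      by (meson add_mono card_Un_le le_refl order_trans)
    also have "\<dots> \<le> card {u\<in>U. u + s*t \<in> A} + s*t + t*e"
    proof -
      have 1: "card ((\<lambda>u. u + s*t) ` {u\<in>U. u + s*t \<in> A}) \<le> card {u\<in>U. u + s*t \<in> A}" by (rule card_image_le) (use finU in auto)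
      have "{a\<in>A. a < s*t} \<subseteq> {..<s*t}" by auto
      then have 2: "card {a\<in>A. a < s*t} \<le> s*t" using card_mono[of "{..<s*t}"] by fastforce
      have 3: "card ((\<lambda>z. z + t*s) ` {z\<in>D. z + t*s \<notin> D}) \<le> t*e"
        using card_image_le[of "{z\<in>D. z + t*s \<notin> D}" "\<lambda>z. z + t*s"] chain_bound[OF finD, of t s] finD
        unfolding e_def by simp
      show ?thesis using 1 2 3 by linarith
    qed
    finally show ?thesis .
  qed
  have "lw * card A \<le> (\<Sum>t<lw. card {u\<in>U. u + s*t \<in> A} + lw*(s + e))"
  proof -
    have "lw * card A = (\<Sum>t<lw. card A)" by simp
    also have "\<dots> \<le> (\<Sum>t<lw. card {u\<in>U. u + s*t \<in> A} + lw*(s + e))"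
    proof (rule sum_mono)
      fix t assume "t \<in> {..<lw}"
      then have "s*t + t*e \<le> lw*(s+e)"
        by (simp add: algebra_simps add_mono mult_right_mono mult_left_mono)
      then show "card A \<le> card {u\<in>U. u + s*t \<in> A} + lw*(s + e)" using low[of t] by linarith
    qed
    finally show ?thesis .
  qed
  also have "\<dots> = (\<Sum>t<lw. card {u\<in>U. u + s*t \<in> A}) + lw*(lw*(s + e))"
    by (simp add: sum.distrib)
  finally have "real (lw * card A) \<le> real (\<Sum>u\<in>U. card {t\<in>{..<lw}. u + s*t \<in> A}) + real (lw*(lw*(s + e)))"
    using sw by linarith
  also have "\<dots> \<le> real (card U) * (\<beta> * lw) + real (lw*(lw*(s + e)))" using up by linarith
  finally have "real lw * real (card A) \<le> real lw * (real (card U) * \<beta> + real lw * (real s + real e))"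
    by (simp add: algebra_simps)
  then have "real (card A) \<le> real (card U) * \<beta> + real lw * (real s + real e)"
    using l by (simp add: mult_le_cancel_left_pos)
  then show ?thesis using cU cD unfolding e_def by (simp add: of_nat_diff algebra_simps)
qed



fun cube :: "nat \<Rightarrow> (nat \<Rightarrow> nat) \<Rightarrow> nat \<Rightarrow> nat set" where
  "cube x d 0 = {x}"
| "cube x d (Suc k) = cube x d k \<union> (\<lambda>z. z + d k) ` cube x d k"

lemma cube_cong: "(\<forall>i<k. d i = d' i) \<Longrightarrow> cube x d k = cube x d' k"
  by (induction k) auto

lemma cube_mono: "j \<le> k \<Longrightarrow> cube x d j \<subseteq> cube x d k"
proof (induction k)
  case 0 then show ?case by simp
next
  case (Suc k) then show ?case by (cases "j = Suc k") auto
qed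

lemma aux_pres: "(q::nat) \<le> 2*(b+S) \<Longrightarrow> b*4 \<le> q \<Longrightarrow> q \<le> 4*S" by presburger

lemma pigeon:
  assumes B: "B \<subseteq> {a..<a+M}" and b: "card B \<ge> 4"
  shows "\<exists>d. 1 \<le> d \<and> d < M \<and> card B ^ 2 \<le> 4 * M * card {x\<in>B. x + d \<in> B}"
proof (rule ccontr)
  assume neg: "\<not> ?thesis"
  have finB: "finite B" using B finite_subset by blast
  let ?c = "\<lambda>d. card {x\<in>B. x + d \<in> B}"
  define P where "P = {p\<in>B\<times>B. fst p \<le> snd p}"
  have finP: "finite P" unfolding P_def using finB by simp
  have "B \<times> B \<subseteq> P \<union> (\<lambda>(x,y). (y,x)) ` P" unfolding P_def by (auto simp: image_iff)
  then have "card (B \<times> B) \<le> card (P \<union> (\<lambda>(x,y). (y,x)) ` P)" by (rule card_mono[rotated]) (use finP in auto)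
  also have "\<dots> \<le> card P + card ((\<lambda>(x,y). (y,x)) ` P)" by (rule card_Un_le)
  also have "\<dots> \<le> card P + card P" using card_image_le[OF finP] by simp
  finally have P2: "card B ^ 2 \<le> 2 * card P" by (simp add: card_cartesian_product power2_eq_square)
  have Pe: "P = (\<Union>d\<in>{..<M}. (\<lambda>x. (x, x + d)) ` {x\<in>B. x + d \<in> B})"
  proof
    show "P \<subseteq> (\<Union>d\<in>{..<M}. (\<lambda>x. (x, x + d)) ` {x\<in>B. x + d \<in> B})"
    proof
      fix p assume "p \<in> P"
      then obtain x y where p: "p = (x,y)" "x \<in> B" "y \<in> B" "x \<le> y" unfolding P_def by auto
      have "a \<le> x" "y < a + M" using p B by auto
      then have "y - x < M" using p(4) by arith
      moreover have "p = (x, x + (y - x))" "x + (y - x) \<in> B" using p by auto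
      ultimately show "p \<in> (\<Union>d\<in>{..<M}. (\<lambda>x. (x, x + d)) ` {x\<in>B. x + d \<in> B})" using p(2) by blast
    qed
    show "(\<Union>d\<in>{..<M}. (\<lambda>x. (x, x + d)) ` {x\<in>B. x + d \<in> B}) \<subseteq> P" unfolding P_def by auto
  qed
  have cP: "card P = (\<Sum>d<M. ?c d)"
  proof -
    have "card P = (\<Sum>d<M. card ((\<lambda>x. (x, x + d)) ` {x\<in>B. x + d \<in> B}))"
      unfolding Pe by (rule card_UN_disjoint) (use finB in auto)
    also have "\<dots> = (\<Sum>d<M. ?c d)"
      by (intro sum.cong refl card_image) (simp add: inj_on_def)
    finally show ?thesis .
  qed
  have M0: "M > 0"
  proof (rule ccontr)
    assume "\<not> M > 0" then have "B = {}" using B by auto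
    then show False using b by simp
  qed
  have "(\<Sum>d<M. ?c d) = ?c 0 + (\<Sum>d\<in>{1..<M}. ?c d)"
  proof -
    have "{..<M} = insert 0 {1..<M}" using M0 by auto
    then show ?thesis by simp
  qed
  moreover have "?c 0 = card B" by simp
  ultimately have S: "card P = card B + (\<Sum>d\<in>{1..<M}. ?c d)" using cP by simp
  have "(\<Sum>d\<in>{1..<M}. 4 * M * ?c d) \<le> of_nat (card {1..<M}) * (card B ^ 2)"
    by (rule sum_bounded_above) (use neg in \<open>auto simp: not_le\<close>)
  then have U: "4 * M * (\<Sum>d\<in>{1..<M}. ?c d) \<le> (M - 1) * card B ^ 2" by (simp add: sum_distrib_left)
  have L: "card B ^ 2 \<le> 4 * (\<Sum>d\<in>{1..<M}. ?c d)"
  proof -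
    have h2: "card B * 4 \<le> card B * card B" using b by (intro mult_left_mono) auto
    have h1: "card B * card B \<le> 2 * (card B + (\<Sum>d\<in>{1..<M}. ?c d))" using P2 S by (simp add: power2_eq_square)
    show ?thesis using aux_pres[OF h1 h2] unfolding power2_eq_square .
  qed
  have "M * card B ^ 2 \<le> M * (4 * (\<Sum>d\<in>{1..<M}. ?c d))" using L by (rule mult_left_mono) simp
  also have "\<dots> = 4 * M * (\<Sum>d\<in>{1..<M}. ?c d)" by simp
  also have "\<dots> \<le> (M - 1) * card B ^ 2" by (rule U)
  finally have "M * card B ^ 2 \<le> (M - 1) * card B ^ 2" .
  moreover have "card B ^ 2 > 0" using b by simp
  ultimately have "M \<le> M - 1" by simp
  then show False using M0 by simp
qed

lemma cube_lemma:
  "\<forall>\<delta> B. B \<subseteq> {a..<a+M} \<longrightarrow> \<delta> > 0 \<longrightarrow> real (card B) \<ge> \<delta> * M \<longrightarrow> (\<delta>/4)^(2^k) * M \<ge> 1 \<longrightarrow>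
     (\<exists>x d. (\<forall>i<k. 1 \<le> d i \<and> d i < M) \<and> cube x d k \<subseteq> B)"
proof (induction k)
  case 0
  show ?case
  proof (intro allI impI)
    fix \<delta> :: real and B assume h: "B \<subseteq> {a..<a+M}" "\<delta> > 0" "real (card B) \<ge> \<delta> * M" "(\<delta>/4)^(2^0) * M \<ge> 1"
    have "\<delta> * M \<ge> 4" using h(4) by simp
    then have "card B > 0" using h(3) by linarith
    then obtain x where "x \<in> B" by (metis card_gt_0_iff ex_in_conv)
    then show "\<exists>x d. (\<forall>i<0. 1 \<le> d i \<and> d i < M) \<and> cube x d 0 \<subseteq> B" by auto
  qed
next
  case (Suc k)
  show ?case
  proof (intro allI impI)
    fix \<delta> :: real and B assume h: "B \<subseteq> {a..<a+M}" "\<delta> > 0" "real (card B) \<ge> \<delta> * M" "(\<delta>/4)^(2^Suc k) * M \<ge> 1"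
    have finB: "finite B" using h(1) finite_subset by blast
    have cBM: "card B \<le> M" using card_mono[OF _ h(1)] by simp
    have M0: "M > 0" using h(4) by (cases "M = 0") auto
    have d1: "\<delta> \<le> 1"
    proof -
      have "\<delta> * M \<le> 1 * M" using h(3) cBM by simp
      then show ?thesis using M0 by (simp add: mult_le_cancel_right)
    qed
    have "(\<delta>/4)^(2^Suc k) \<le> (\<delta>/4)^1"
      by (rule power_decreasing) (use h(2) d1 in auto)
    then have "(\<delta>/4)^(2^Suc k) * M \<le> (\<delta>/4) * M" by (intro mult_right_mono) auto
    then have "(\<delta>/4) * M \<ge> 1" using h(4) by linarith
    then have dM: "\<delta> * M \<ge> 4" by simp
    then have b4: "card B \<ge> 4" using h(3) by linarith
    obtain d where d: "1 \<le> d" "d < M" "card B ^ 2 \<le> 4 * M * card {x\<in>B. x + d \<in> B}"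
      using pigeon[OF h(1) b4] by blast
    define B' where "B' = {x\<in>B. x + d \<in> B}"
    define \<delta>' where "\<delta>' = \<delta>^2 / 4"
    have B'sub: "B' \<subseteq> {a..<a+M}" using h(1) unfolding B'_def by auto
    have "real (card B') \<ge> \<delta>' * M"
    proof -
      have "real (card B ^ 2) \<le> real (4 * M * card B')" using d(3) unfolding B'_def by (rule of_nat_mono)
      then have "real (card B) ^ 2 \<le> 4 * M * real (card B')" by simp
      moreover have "(\<delta> * M)^2 \<le> real (card B) ^ 2" using h(3) dM by (intro power_mono) auto
      ultimately have "(\<delta> * M)^2 \<le> 4 * M * real (card B')" by linarith
      moreover have "(\<delta> * M)^2 = (4 * M) * (\<delta>' * M)" unfolding \<delta>'_def by (simp add: power2_eq_square)
      ultimately have "(4 * M) * (\<delta>' * M) \<le> (4 * M) * real (card B')" by simp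
      then show ?thesis using M0 by (simp add: mult_le_cancel_left_pos)
    qed
    moreover have "(\<delta>'/4)^(2^k) * M \<ge> 1"
    proof -
      have "(\<delta>'/4)^(2^k) = ((\<delta>/4)^2)^(2^k)" unfolding \<delta>'_def by (simp add: power2_eq_square)
      also have "\<dots> = (\<delta>/4)^(2^Suc k)" by (simp add: power_mult[symmetric] mult.commute)
      finally show ?thesis using h(4) by simp
    qed
    moreover have "\<delta>' > 0" unfolding \<delta>'_def using h(2) by simp
    ultimately obtain x d' where xd: "\<forall>i<k. 1 \<le> d' i \<and> d' i < M" "cube x d' k \<subseteq> B'"
      using Suc.IH B'sub by blast
    define d'' where "d'' = d'(k := d)"
    have cc: "cube x d'' k = cube x d' k" by (rule cube_cong) (simp add: d''_def)
    have "cube x d'' (Suc k) \<subseteq> B"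
    proof -
      have "cube x d'' (Suc k) = cube x d' k \<union> (\<lambda>z. z + d) ` cube x d' k"
        using cc by (simp add: d''_def)
      moreover have "cube x d' k \<subseteq> B" "(\<lambda>z. z + d) ` cube x d' k \<subseteq> B"
        using xd(2) unfolding B'_def by auto
      ultimately show ?thesis by auto
    qed
    moreover have "\<forall>i<Suc k. 1 \<le> d'' i \<and> d'' i < M" using xd(1) d unfolding d''_def by auto
    ultimately show "\<exists>x d. (\<forall>i<Suc k. 1 \<le> d i \<and> d i < M) \<and> cube x d (Suc k) \<subseteq> B" by blast
  qed
qed



lemma core1:
  fixes cp ccp ccn cn M L0 c :: real
  shows "cp \<ge> cn/4 - c \<Longrightarrow> ccp \<ge> 0 \<Longrightarrow> ccn \<le> cn \<Longrightarrow> M \<le> ccn/64 \<Longrightarrow> cn \<ge> 64*(L0+1) \<Longrightarrow> c \<le> 1 \<Longrightarrow> c > 0 \<Longrightarrow> L0 \<ge> 1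
  \<Longrightarrow> ccn \<ge> 0 \<Longrightarrow> cp/2 + ccp/64 - ccn/32 - 2*L0 - M > 0" by (rule ccontr) (simp add: not_less)

lemma core2:
  fixes X Bn BcD L0s L0e ccn Bc1 BBp EBn BL0 ccp cc En L0 :: real
  shows "X < Bn - BcD + L0s + L0e \<Longrightarrow> L0s \<le> ccn/32 \<Longrightarrow> L0e \<le> ccn/32 \<Longrightarrow> BcD \<ge> Bc1
   \<Longrightarrow> Bc1 \<ge> BBp - 2*EBn - BL0 \<Longrightarrow> BBp \<ge> ccp \<Longrightarrow> ccp \<ge> ccn/4 - cc \<Longrightarrow> EBn \<le> 2*En
   \<Longrightarrow> BL0 \<le> 2*L0 \<Longrightarrow> En = ccn/64 \<Longrightarrow> Bn - X = 2*En \<Longrightarrow> ccn \<ge> 64*(L0+2) \<Longrightarrow> cc \<le> 1 \<Longrightarrow> L0 \<ge> 1 \<Longrightarrow> False"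
  by simp

lemma num1:
  fixes c n p M L0 :: real
  assumes c: "0 < c" "c \<le> 1" and L0: "L0 \<ge> 1" and n: "n \<ge> 0" and p: "p \<ge> n/4 - 1" "p \<ge> 0"
    and M: "M \<le> c*c*n/(64*L0)" and cn: "c*n \<ge> 64*(L0+1)"
  shows "(c - c^2/64)*n - (c + c^2/64)*(n - p) - 2*L0 > (c/2)*p + M"
proof -
  have "c*p \<ge> c*(n/4 - 1)" using p c by (intro mult_left_mono) auto
  moreover have "c*(n/4 - 1) = c*n/4 - c" by (simp add: algebra_simps)
  ultimately have a1: "c*p \<ge> c*n/4 - c" by simp
  have a2: "c*c*p \<ge> 0" using p by simp
  have "c*c \<le> c" using c by (intro mult_left_le_one_le) auto
  then have a3: "c*c*n \<le> c*n" using n by (rule mult_right_mono)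
  have a4: "c*c*n/(64*L0) \<le> c*c*n/64"
    using L0 n by (intro divide_left_mono) (auto intro: mult_nonneg_nonneg)
  have e: "(c - c^2/64)*n - (c + c^2/64)*(n - p) - 2*L0 - ((c/2)*p + M)
      = c*p/2 + c*c*p/64 - c*c*n/32 - 2*L0 - M" by (simp add: power2_eq_square field_simps)
  have "c*p/2 + c*c*p/64 - c*c*n/32 - 2*L0 - M > 0"
    using core1[OF a1 a2 a3 _ cn c(2) c(1) L0] a4 M n c by (simp add: zero_le_mult_iff)
  then show ?thesis using e by linarith
qed

lemma num2:
  fixes c n p M L0 k c1 cD cA e s :: real
  assumes c: "0 < c" "c \<le> 1" and L0: "L0 \<ge> 1" and n: "n \<ge> 0" and p: "p \<ge> n/4 - 1" "p \<ge> 0"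
    and M: "M \<le> c*c*n/(64*L0)" and cn: "c*c*n \<ge> 64*(L0+2)"
    and c1: "c1 \<ge> (c - c^2/64)*n - (c + c^2/64)*(n - p) - L0"
    and cA1: "cA > (c - c^2/64)*n"
    and cA2: "cA \<le> (c + c^2/64)*(n - cD) + L0*(s + e)"
    and cD: "cD \<ge> c1" and s: "s \<le> 2*M" and e: "e \<ge> 0" and ke: "k*e \<le> n"
    and k: "k \<ge> 32*L0/(c*c)"
  shows False
proof -
  define \<epsilon> where "\<epsilon> = c*c/64"
  define \<beta> where "\<beta> = c + \<epsilon>"
  have epos: "\<epsilon> \<ge> 0" "\<epsilon> \<le> 1/64" unfolding \<epsilon>_def using c by (auto simp: mult_le_one)
  have bb: "\<beta> \<ge> c" "\<beta> \<le> 2" unfolding \<beta>_def using epos c by auto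
  have cc: "c*c > 0" "c*c \<le> 1" using c by (auto simp: mult_le_one)
  have x1: "(c + c^2/64)*(n - cD) = \<beta>*n - \<beta>*cD" unfolding \<beta>_def \<epsilon>_def by (simp add: power2_eq_square field_simps)
  have x2: "(c - c^2/64)*n = (c-\<epsilon>)*n" unfolding \<epsilon>_def by (simp add: power2_eq_square)
  have x3: "L0*(s+e) = L0*s + L0*e" by (simp add: algebra_simps)
  have h1: "(c-\<epsilon>)*n < \<beta>*n - \<beta>*cD + L0*s + L0*e"
    using cA1 cA2 x1 x2 x3 by linarith
  have "L0*M \<le> c*c*n/64"
  proof -
    have "L0*M \<le> L0*(c*c*n/(64*L0))" using M L0 by (intro mult_left_mono) auto
    also have "\<dots> = c*c*n/64" using L0 by (simp add: field_simps)
    finally show ?thesis .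
  qed
  moreover have "L0*s \<le> L0*(2*M)" using s L0 by (intro mult_left_mono) auto
  ultimately have h2: "L0*s \<le> c*c*n/32" by simp
  have "32*L0 \<le> c*c*k" using k cc by (simp add: field_simps)
  then have "32*L0*e \<le> c*c*k*e" using e by (intro mult_right_mono) auto
  also have "\<dots> = c*c*(k*e)" by simp
  also have "\<dots> \<le> c*c*n" using ke cc by (intro mult_left_mono) auto
  finally have h3: "L0*e \<le> c*c*n/32" by simp
  have h4: "\<beta>*cD \<ge> \<beta>*c1" using cD bb c by (intro mult_left_mono) auto
  have "(c - c^2/64)*n - (c + c^2/64)*(n - p) - L0 = \<beta>*p - 2*\<epsilon>*n - L0"
    unfolding \<beta>_def \<epsilon>_def by (simp add: power2_eq_square field_simps)
  then have "c1 \<ge> \<beta>*p - 2*\<epsilon>*n - L0" using c1 by linarith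
  then have "\<beta>*c1 \<ge> \<beta>*(\<beta>*p - 2*\<epsilon>*n - L0)" using bb c by (intro mult_left_mono) auto
  then have h5: "\<beta>*c1 \<ge> \<beta>*\<beta>*p - 2*(\<epsilon>*\<beta>*n) - \<beta>*L0" by (simp add: algebra_simps)
  have h6: "\<beta>*\<beta>*p \<ge> c*c*p" using bb c p by (intro mult_right_mono mult_mono) auto
  have "c*c*p \<ge> c*c*(n/4 - 1)" using p cc by (intro mult_left_mono) auto
  then have h7: "c*c*p \<ge> c*c*n/4 - c*c" by (simp add: algebra_simps)
  have "\<epsilon>*\<beta>*n \<le> \<epsilon>*2*n" using bb epos n by (intro mult_right_mono mult_left_mono) auto
  then have h8: "\<epsilon>*\<beta>*n \<le> 2*(\<epsilon>*n)" by simp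
  have h9: "\<beta>*L0 \<le> 2*L0" using bb L0 by (intro mult_right_mono) auto
  have h10: "\<epsilon>*n = c*c*n/64" unfolding \<epsilon>_def by simp
  have h13: "\<beta>*n - (c-\<epsilon>)*n = 2*(\<epsilon>*n)" unfolding \<beta>_def by (simp add: algebra_simps)
  show False using core2[OF h1 h2 h3 h4 h5 h6 h7 h8 h9 h10 h13 cn cc(2) L0] .
qed

lemma tele:
  fixes f :: "nat \<Rightarrow> nat"
  assumes mono: "\<forall>j<k. f j \<le> f (Suc j)" and fk: "f k \<le> n" and k: "k \<ge> 1"
  shows "\<exists>j<k. k * (f (Suc j) - f j) \<le> n"
proof (rule ccontr)
  assume "\<not> ?thesis"
  then have big: "\<forall>j<k. k * (f (Suc j) - f j) \<ge> n + 1" by auto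
  have "\<forall>m\<le>k. k * f m \<ge> k * f 0 + m*(n+1)"
  proof (intro allI impI)
    fix m assume "m \<le> k"
    then show "k * f m \<ge> k * f 0 + m*(n+1)"
    proof (induction m)
      case 0 then show ?case by simp
    next
      case (Suc m)
      then have m: "m < k" by simp
      have "k * f (Suc m) = k * f m + k * (f (Suc m) - f m)" using mono m by (simp add: diff_mult_distrib2)
      moreover have "k * (f (Suc m) - f m) \<ge> n + 1" using big m by blast
      moreover have "k * f m \<ge> k * f 0 + m*(n+1)" using Suc.IH m by simp
      moreover have "Suc m * (n+1) = m*(n+1) + (n+1)" by simp
      ultimately show ?case by linarith
    qed
  qed
  then have "k * f k \<ge> k * f 0 + k*(n+1)" by simp
  moreover have "k * f k \<le> k * n" using fk by simp
  ultimately show False using k by (simp add: algebra_simps)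
qed



lemma finite_cube: "finite (cube x d k)"
  by (induction k) auto

lemma roth_main:
  fixes c :: real
  assumes c: "0 < c" "c \<le> 1"
    and good: "\<forall>L\<ge>L0'. \<forall>S. S \<subseteq> {0..<L} \<longrightarrow> \<not> has_3AP S \<longrightarrow> real (card S) \<le> (c + c^2/64) * real L"
    and bad: "\<forall>N0. \<exists>n\<ge>N0. \<exists>A. A \<subseteq> {0..<n} \<and> \<not> has_3AP A \<and> real (card A) > (c - c^2/64) * n"
  shows False
proof -
  define \<beta> where "\<beta> = c + c^2/64"
  have \<beta>: "\<beta> \<ge> 0" "\<beta> \<ge> c" using c by (auto simp: \<beta>_def)
  define L0 where "L0 = max L0' 1"
  have L0: "L0 \<ge> 1" "L0 \<ge> L0'" by (auto simp: L0_def)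
  have L0r: "real L0 \<ge> 1" using L0(1) by simp
  have good': "\<forall>L\<ge>L0. \<forall>S. S \<subseteq> {0..<L} \<longrightarrow> \<not> has_3AP S \<longrightarrow> real (card S) \<le> \<beta> * real L"
    using good L0(2) unfolding \<beta>_def by auto
  define k where "k = nat \<lceil>32*real L0/(c*c)\<rceil> + 1"
  have k1: "k \<ge> 1" unfolding k_def by simp
  have k2: "real k \<ge> 32*real L0/(c*c)"
  proof -
    have h: "32*real L0/(c*c) \<le> of_int \<lceil>32*real L0/(c*c)\<rceil>" by (rule le_of_int_ceiling)
    show ?thesis unfolding k_def using h by (simp; linarith)
  qed
  define \<gamma> where "\<gamma> = (c/2/4)^(2^k)"
  have \<gamma>: "\<gamma> > 0" using c by (simp add: \<gamma>_def)
  have cc: "c*c > 0" "c*c \<le> 1" using c by (auto simp: mult_le_one)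
  define X where "X = (1/\<gamma>+1)*(64*(real L0+2))/(c*c)"
  obtain n A where n: "n \<ge> nat \<lceil>X\<rceil>" and A: "A \<subseteq> {0..<n}" "\<not> has_3AP A" "real (card A) > (c - c^2/64) * real n"
    using bad by blast
  have nX: "real n \<ge> X" using n real_nat_ceiling_ge[of X] by linarith
  have ccX: "c*c*X = (1/\<gamma>+1)*(64*(real L0+2))" unfolding X_def using cc(1) by (simp only: nonzero_mult_div_cancel_left less_irrefl times_divide_eq_right)
  have ccn: "c*c*real n \<ge> c*c*X" using nX cc by (intro mult_left_mono) auto
  have ig: "1 \<le> 1/\<gamma> + 1" using \<gamma> by simp
  have nb1: "c*c*real n \<ge> 64*(real L0+2)"
  proof -
    have h: "1*(64*(real L0+2)) \<le> (1/\<gamma>+1)*(64*(real L0+2))" by (rule mult_right_mono[OF ig]) simp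
    show ?thesis using h ccn ccX by linarith
  qed
  have nb2: "c*real n \<ge> 64*(real L0+1)"
  proof -
    have "c*c \<le> c" using c by (intro mult_left_le_one_le) auto
    then have h: "c*c*real n \<le> c*real n" by (rule mult_right_mono) simp
    have "64*(real L0+1) \<le> 64*(real L0+2)" by simp
    then show ?thesis using nb1 h by (meson order_trans)
  qed
  have nb3: "c*c*real n/(64*real L0) \<ge> 1/\<gamma> + 1"
  proof -
    have h: "(1/\<gamma>+1)*(64*real L0) \<le> (1/\<gamma>+1)*(64*(real L0+2))" using ig by (intro mult_left_mono) auto
    have "(1/\<gamma>+1)*(64*real L0) \<le> c*c*real n" using h ccn ccX by linarith
    moreover have "0 < 64*real L0" using L0r by simp
    ultimately show ?thesis by (simp add: pos_le_divide_eq)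
  qed
  define p where "p = n div 4"
  have p4: "4*p \<le> n" unfolding p_def by simp
  have pn: "p \<le> n" using p4 by simp
  have rp: "real p \<ge> real n/4 - 1"
  proof -
    have "n < 4*p + 4" unfolding p_def by linarith
    then have "real n < 4*real p + 4" by linarith
    then show ?thesis by linarith
  qed
  define x where "x = c*c*real n/(64*real L0)"
  have xnn: "x \<ge> 0" unfolding x_def using cc L0r by simp
  define M where "M = nat \<lfloor>x\<rfloor>"
  have RM: "real M = real_of_int \<lfloor>x\<rfloor>" unfolding M_def using xnn by simp
  have Mle: "real M \<le> c*c*real n/(64*real L0)" using RM of_int_floor_le[of x] unfolding x_def by linarith
  have Mge: "real M \<ge> 1/\<gamma>" using RM real_of_int_floor_gt_diff_one[of x] nb3 unfolding x_def by linarith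
  have \<gamma>M: "(c/2/4)^(2^k) * real M \<ge> 1"
  proof -
    have "\<gamma> * real M \<ge> \<gamma> * (1/\<gamma>)" using Mge \<gamma> by (intro mult_left_mono) auto
    moreover have "\<gamma> * (1/\<gamma>) = 1" using \<gamma> by simp
    ultimately have "\<gamma> * real M \<ge> 1" by simp
    then show ?thesis unfolding \<gamma>_def .
  qed
  have M1: "M \<ge> 1"
  proof -
    have "1/\<gamma> > 0" using \<gamma> by simp
    then have "real M > 0" using Mge by linarith
    then show ?thesis by simp
  qed
  have IB: "\<And>a L. real (card (A \<inter> {a..<a+L})) \<le> \<beta> * real L + real L0"
    using interval_bound[OF good' A(2) \<beta>(1)] by blast
  have finA: "finite A" using A(1) finite_subset by blast
  define Y where "Y = A \<inter> {0..<p}"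
  have cardsplit: "card A = card Y + card (A \<inter> {p..<n})"
  proof -
    have "A = Y \<union> (A \<inter> {p..<n})" unfolding Y_def using A(1) by auto
    moreover have "Y \<inter> (A \<inter> {p..<n}) = {}" unfolding Y_def by auto
    ultimately show ?thesis using finA card_Un_disjoint[of Y "A \<inter> {p..<n}"] unfolding Y_def by auto
  qed
  have c1b: "real (card Y) \<ge> (c - c^2/64)*real n - \<beta>*(real n - real p) - real L0"
  proof -
    have e: "A \<inter> {p..<n} = A \<inter> {p..<p+(n-p)}" using pn by simp
    have h: "real (card (A \<inter> {p..<p+(n-p)})) \<le> \<beta>*real (n - p) + real L0" by (rule IB)
    have rd: "real (n - p) = real n - real p" using pn by (rule of_nat_diff)
    have "real (card (A \<inter> {p..<n})) \<le> \<beta>*(real n - real p) + real L0" using h[folded e] by (simp only: rd)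
    moreover have "real (card A) = real (card Y) + real (card (A \<inter> {p..<n}))" using cardsplit by simp
    ultimately show ?thesis using A(3) by linarith
  qed
  have c1up: "real (card Y) \<le> \<beta> * real p + real L0" using IB[of 0 p] unfolding Y_def by simp
  define Mid where "Mid = A \<inter> {p..<2*p}"
  define R where "R = A \<inter> {2*p..<n}"
  have split2: "card (A \<inter> {p..<n}) = card Mid + card R"
  proof -
    have "A \<inter> {p..<n} = Mid \<union> R" unfolding Mid_def R_def using p4 by auto
    moreover have "Mid \<inter> R = {}" unfolding Mid_def R_def by auto
    ultimately show ?thesis using finA card_Un_disjoint[of Mid R] unfolding Mid_def R_def by auto
  qed
  have Rup: "real (card R) \<le> \<beta> * (real n - 2*real p) + real L0"
  proof -
    have e: "R = A \<inter> {2*p..<2*p+(n-2*p)}" unfolding R_def using p4 by simp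
    have h: "real (card (A \<inter> {2*p..<2*p+(n-2*p)})) \<le> \<beta>*real (n - 2*p) + real L0" by (rule IB)
    have rd: "real (n - 2*p) = real n - 2*real p" using p4 by (simp add: of_nat_diff)
    show ?thesis using h[folded e] by (simp only: rd)
  qed
  define J where "J = (\<lambda>i. {p + i*M..<p + i*M + M})"
  define q where "q = p div M"
  have dm: "q * M + p mod M = p" unfolding q_def by (rule div_mult_mod_eq)
  have pm: "p mod M < M" using M1 by simp
  have blk: "\<exists>i<q. real (card (A \<inter> J i)) \<ge> (c/2) * M"
  proof (rule ccontr)
    assume "\<not> ?thesis"
    then have lt: "\<And>i. i \<in> {..<q} \<Longrightarrow> real (card (A \<inter> J i)) \<le> (c/2)*M" by auto
    have sub: "Mid \<subseteq> (\<Union>i\<in>{..<q}. A \<inter> J i) \<union> {p + q*M..<2*p}"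
    proof
      fix x assume x: "x \<in> Mid"
      show "x \<in> (\<Union>i\<in>{..<q}. A \<inter> J i) \<union> {p + q*M..<2*p}"
      proof (cases "x < p + q*M")
        case True
        define i where "i = (x - p) div M"
        have e1: "i * M + (x-p) mod M = x - p" unfolding i_def by (rule div_mult_mod_eq)
        have e2: "(x-p) mod M < M" using M1 by simp
        have xp: "p \<le> x" using x unfolding Mid_def by auto
        have "x - p < q * M" using True xp by linarith
        then have iq: "i < q" unfolding i_def by (rule less_mult_imp_div_less)
        have "p + i*M \<le> x" "x < p + i*M + M" using e1 e2 xp by linarith+
        then have "x \<in> J i" unfolding J_def by simp
        then show ?thesis using x iq unfolding Mid_def by blast
      next
        case False then show ?thesis using x unfolding Mid_def by auto
      qed
    qed
    have "card Mid \<le> card ((\<Union>i\<in>{..<q}. A \<inter> J i) \<union> {p + q*M..<2*p})"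
      by (rule card_mono[OF _ sub]) (simp add: J_def)
    also have "\<dots> \<le> card (\<Union>i\<in>{..<q}. A \<inter> J i) + card {p + q*M..<2*p}" by (rule card_Un_le)
    also have "\<dots> \<le> (\<Sum>i<q. card (A \<inter> J i)) + (p - q*M)"
    proof -
      have "card {p + q*M..<2*p} = 2*p - (p + q*M)" by simp
      also have "\<dots> = p - q*M" by arith
      finally show ?thesis using card_UN_le[of "{..<q}" "\<lambda>i. A \<inter> J i"] by simp
    qed
    finally have cm: "card Mid \<le> (\<Sum>i<q. card (A \<inter> J i)) + (p - q*M)" .
    have "real (\<Sum>i<q. card (A \<inter> J i)) = (\<Sum>i<q. real (card (A \<inter> J i)))" by simp
    also have "\<dots> \<le> real (card {..<q}) * ((c/2)*M)" by (rule sum_bounded_above) (rule lt)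
    also have "\<dots> = (c/2) * real (q*M)" by (simp add: algebra_simps)
    also have "\<dots> \<le> (c/2) * p"
    proof -
      have "q*M \<le> p" using dm by linarith
      then have "real (q*M) \<le> real p" by (rule of_nat_mono)
      then show ?thesis using c by (intro mult_left_mono) auto
    qed
    finally have sb: "real (\<Sum>i<q. card (A \<inter> J i)) \<le> (c/2) * p" .
    have "p - q*M = p mod M" using dm by arith
    then have pq: "real (p - q*M) \<le> real M" using pm by simp
    have "real (card Mid) \<le> real (\<Sum>i<q. card (A \<inter> J i)) + real (p - q*M)"
      using cm by (metis of_nat_add of_nat_le_iff)
    then have midup: "real (card Mid) \<le> (c/2)*real p + real M" using sb pq by linarith
    have "real (card A) = real (card Y) + real (card Mid) + real (card R)" using cardsplit split2 by simp
    then have midlow: "real (card Mid) \<ge> (c - c^2/64)*real n - (\<beta>*real p + real L0) - (\<beta> * (real n - 2*real p) + real L0)"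
      using A(3) c1up Rup by linarith
    have bs: "\<beta>*(real n - real p) = \<beta>*real p + \<beta> * (real n - 2*real p)" by (simp add: algebra_simps)
    have "(c - c^2/64)*real n - (c + c^2/64)*(real n - real p) - 2*real L0 > (c/2)*real p + real M"
      by (rule num1[OF c L0r _ _ _ Mle nb2]) (use rp in auto)
    then show False using midup midlow bs unfolding \<beta>_def by linarith
  qed
  then obtain i where i: "i < q" "real (card (A \<inter> J i)) \<ge> (c/2) * M" by blast
  define a0 where "a0 = p + i*M"
  have a0M: "a0 + M \<le> 2*p"
  proof -
    have "Suc i * M \<le> q * M" using i(1) by (intro mult_right_mono) auto
    moreover have "p + i*M + M = p + Suc i * M" by simp
    ultimately show ?thesis unfolding a0_def using dm by linarith
  qed
  have Jsub: "A \<inter> J i \<subseteq> {a0..<a0+M}" unfolding J_def a0_def by auto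
  obtain x0 d where dd: "\<forall>j<k. 1 \<le> d j \<and> d j < M" and cub: "cube x0 d k \<subseteq> A \<inter> J i"
    using cube_lemma[of a0 M k, rule_format, OF Jsub _ i(2) \<gamma>M] c by auto
  have hc: "\<And>j h. j \<le> k \<Longrightarrow> h \<in> cube x0 d j \<Longrightarrow> h \<in> A \<and> p \<le> h \<and> h < 2*p"
  proof -
    fix j h assume "j \<le> k" "h \<in> cube x0 d j"
    then have "h \<in> A \<inter> J i" using cube_mono[of j k x0 d] cub by blast
    then show "h \<in> A \<and> p \<le> h \<and> h < 2*p" using a0M unfolding J_def a0_def by auto
  qed
  have hY: "\<And>y. y \<in> Y \<Longrightarrow> y \<in> A \<and> y < p" unfolding Y_def by auto
  have finY: "finite Y" unfolding Y_def by simp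
  define D where "D = (\<lambda>j. (\<lambda>(h,y). 2*h - y) ` (cube x0 d j \<times> Y))"
  have finD: "\<And>j. finite (D j)" unfolding D_def using finY finite_cube by simp
  have Dsub: "\<And>j. j \<le> k \<Longrightarrow> D j \<subseteq> {0..<n}"
  proof
    fix j z assume j: "j \<le> k" and z: "z \<in> D j"
    then obtain h y where hy: "h \<in> cube x0 d j" "y \<in> Y" "z = 2*h - y" unfolding D_def by auto
    have "h < 2*p" using hc[OF j hy(1)] by simp
    moreover have "z \<le> 2*h" using hy(3) by simp
    ultimately have "z < n" using p4 by linarith
    then show "z \<in> {0..<n}" by simp
  qed
  have Ddisj: "\<And>j. j \<le> k \<Longrightarrow> A \<inter> D j = {}"
  proof (rule ccontr)
    fix j assume j: "j \<le> k" and ne: "A \<inter> D j \<noteq> {}"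
    then obtain z where z: "z \<in> A" "z \<in> D j" by blast
    then obtain h y where hy: "h \<in> cube x0 d j" "y \<in> Y" "z = 2*h - y" unfolding D_def by auto
    have h: "h \<in> A" "p \<le> h" using hc[OF j hy(1)] by auto
    have y: "y \<in> A" "y < p" using hY[OF hy(2)] by auto
    have "y + (h - y) = h" "y + 2*(h - y) = z" using h y hy(3) by auto
    then have "h - y \<ge> 1 \<and> y \<in> A \<and> y + (h - y) \<in> A \<and> y + 2*(h - y) \<in> A" using h y z(1) by simp
    then have "has_3AP A" unfolding has_3AP_def by blast
    with A(2) show False by blast
  qed
  have Dmono: "\<And>j j'. j \<le> j' \<Longrightarrow> D j \<subseteq> D j'"
    unfolding D_def using cube_mono by (intro image_mono Sigma_mono) auto
  have D0: "card (D 0) = card Y"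
  proof -
    have x0: "p \<le> x0" using hc[of 0 x0] by simp
    have "D 0 = (\<lambda>y. 2*x0 - y) ` Y" unfolding D_def by auto
    moreover have "inj_on (\<lambda>y. 2*x0 - y) Y"
    proof (rule inj_onI)
      fix y y' assume "y \<in> Y" "y' \<in> Y" "2*x0 - y = 2*x0 - y'"
      then show "y = y'" using hY x0 by fastforce
    qed
    ultimately show ?thesis by (simp add: card_image)
  qed
  have Dstep: "\<And>j. j < k \<Longrightarrow> D (Suc j) = D j \<union> (\<lambda>z. z + 2*d j) ` D j"
  proof -
    fix j assume j: "j < k"
    let ?C = "cube x0 d j"
    have "D (Suc j) = D j \<union> (\<lambda>(h,y). 2*h - y) ` ((\<lambda>z. z + d j) ` ?C \<times> Y)"
      unfolding D_def by auto
    moreover have "(\<lambda>(h,y). 2*h - y) ` ((\<lambda>z. z + d j) ` ?C \<times> Y) = (\<lambda>z. z + 2*d j) ` D j"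
    proof
      show "(\<lambda>(h,y). 2*h - y) ` ((\<lambda>z. z + d j) ` ?C \<times> Y) \<subseteq> (\<lambda>z. z + 2*d j) ` D j"
      proof
        fix z assume "z \<in> (\<lambda>(h,y). 2*h - y) ` ((\<lambda>z. z + d j) ` ?C \<times> Y)"
        then obtain h y where hy: "h \<in> ?C" "y \<in> Y" "z = 2*(h + d j) - y" by auto
        have "y < h" using hc[of j h] hY[OF hy(2)] hy(1) j by fastforce
        then have "z = (2*h - y) + 2*d j" using hy(3) by simp
        moreover have "2*h - y \<in> D j" unfolding D_def using hy by force
        ultimately show "z \<in> (\<lambda>z. z + 2*d j) ` D j" by blast
      qed
      show "(\<lambda>z. z + 2*d j) ` D j \<subseteq> (\<lambda>(h,y). 2*h - y) ` ((\<lambda>z. z + d j) ` ?C \<times> Y)"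
      proof
        fix z assume "z \<in> (\<lambda>z. z + 2*d j) ` D j"
        then obtain h y where hy: "h \<in> ?C" "y \<in> Y" "z = (2*h - y) + 2*d j" unfolding D_def by auto
        have "y < h" using hc[of j h] hY[OF hy(2)] hy(1) j by fastforce
        then have "z = 2*(h + d j) - y" using hy(3) by simp
        then show "z \<in> (\<lambda>(h,y). 2*h - y) ` ((\<lambda>z. z + d j) ` ?C \<times> Y)" using hy by force
      qed
    qed
    ultimately show "D (Suc j) = D j \<union> (\<lambda>z. z + 2*d j) ` D j" by simp
  qed
  obtain j where j: "j < k" "k * (card (D (Suc j)) - card (D j)) \<le> n"
  proof -
    have "\<forall>j<k. card (D j) \<le> card (D (Suc j))" by (intro allI impI card_mono finD Dmono) simp
    moreover have "card (D k) \<le> n" using card_mono[OF _ Dsub[of k]] by simp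
    ultimately show ?thesis using tele[of k "\<lambda>j. card (D j)" n] k1 that by blast
  qed
  define s where "s = 2 * d j"
  define E where "E = {z\<in>D j. z + s \<notin> D j}"
  have s1: "s \<ge> 1" "real s \<le> 2 * real M" using dd j(1) unfolding s_def by auto
  have cardE: "card (D (Suc j)) = card (D j) + card E"
  proof -
    have "D (Suc j) = D j \<union> (\<lambda>z. z + s) ` E" using Dstep[OF j(1)] unfolding E_def s_def by auto
    moreover have "D j \<inter> (\<lambda>z. z + s) ` E = {}" unfolding E_def by auto
    moreover have "card ((\<lambda>z. z + s) ` E) = card E" by (rule card_image) (simp add: inj_on_def)
    moreover have "finite E" unfolding E_def using finD by simp
    ultimately show ?thesis using finD card_Un_disjoint by (metis finite_imageI)
  qed
  have ke: "real k * real (card E) \<le> real n"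
  proof -
    have "k * card E \<le> n" using j(2) cardE by simp
    then show ?thesis by (metis of_nat_le_iff of_nat_mult)
  qed
  have bound: "\<And>u. real (card {t. t < L0 \<and> u + s*t \<in> A}) \<le> \<beta> * real L0"
    using ap_bound(1)[OF good' A(2) s1(1)] by blast
  have sl: "real (card A) \<le> (c + c^2/64) * (real n - real (card (D j))) + real L0 * (real s + real (card E))"
    using sliding[OF A(1) Dsub[of j] Ddisj[of j] L0(1) \<beta>(1) bound] j(1) unfolding E_def \<beta>_def by simp
  have cD: "real (card (D j)) \<ge> real (card Y)"
    using card_mono[OF finD Dmono[of 0 j]] D0 by simp
  have c1b': "real (card Y) \<ge> (c - c^2/64)*real n - (c + c^2/64)*(real n - real p) - real L0"
    using c1b unfolding \<beta>_def .
  have n0: "real n \<ge> 0" "real p \<ge> 0" "real (card E) \<ge> 0" by simp_all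
  show False
    by (rule num2[OF c L0r n0(1) rp n0(2) Mle nb1 c1b' A(3) sl cD s1(2) n0(3) ke k2])
qed

lemma roth: "\<delta> > 0 \<Longrightarrow> \<exists>L0. \<forall>L\<ge>L0. \<forall>S. S \<subseteq> {0..<L} \<longrightarrow> \<not> has_3AP S \<longrightarrow> real (card S) \<le> \<delta> * real L"
proof -
  assume \<delta>: "\<delta> > 0"
  define good where "good = (\<lambda>a::real. \<exists>L0. \<forall>L\<ge>L0. \<forall>S. S \<subseteq> {0..<L} \<longrightarrow> \<not> has_3AP S \<longrightarrow> real (card S) \<le> a * real L)"
  define G where "G = {a. good a}"
  have g1: "good 1" unfolding good_def
  proof (intro exI allI impI)
    fix L :: nat and S assume "S \<subseteq> {0..<L}"
    then have "card S \<le> card {0..<L}" by (intro card_mono) auto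
    then show "real (card S) \<le> 1 * real L" by simp
  qed
  have gmono: "good b" if "good a" "a \<le> b" for a b
  proof -
    from that(1) obtain L0 where L0: "\<forall>L\<ge>L0. \<forall>S. S \<subseteq> {0..<L} \<longrightarrow> \<not> has_3AP S \<longrightarrow> real (card S) \<le> a * real L"
      unfolding good_def by blast
    have "\<forall>L\<ge>L0. \<forall>S. S \<subseteq> {0..<L} \<longrightarrow> \<not> has_3AP S \<longrightarrow> real (card S) \<le> b * real L"
    proof (intro allI impI)
      fix L S assume "L \<ge> L0" "S \<subseteq> {0..<L}" "\<not> has_3AP S"
      then have "real (card S) \<le> a * real L" using L0 by blast
      also have "\<dots> \<le> b * real L" using that(2) by (intro mult_right_mono) auto
      finally show "real (card S) \<le> b * real L" .
    qed
    then show ?thesis unfolding good_def by blast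
  qed
  have gpos: "a \<ge> 0" if "good a" for a
  proof -
    from that obtain L0 where L0: "\<forall>L\<ge>L0. \<forall>S. S \<subseteq> {0..<L} \<longrightarrow> \<not> has_3AP S \<longrightarrow> real (card S) \<le> a * real L"
      unfolding good_def by blast
    have "\<not> has_3AP {}" unfolding has_3AP_def by simp
    then have "0 \<le> a * real (max L0 1)" using L0[rule_format, of "max L0 1" "{}"] by simp
    moreover have "real (max L0 1) > 0" by simp
    ultimately show ?thesis by (simp add: zero_le_mult_iff)
  qed
  have Gne: "G \<noteq> {}" using g1 unfolding G_def by blast
  have Gbdd: "bdd_below G" unfolding G_def bdd_below_def using gpos by blast
  define c where "c = Inf G"
  have c0: "c \<ge> 0" unfolding c_def by (rule cInf_greatest[OF Gne]) (use gpos G_def in auto)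
  have c1: "c \<le> 1" unfolding c_def by (rule cInf_lower[OF _ Gbdd]) (use g1 G_def in auto)
  have "c = 0"
  proof (rule ccontr)
    assume "c \<noteq> 0"
    then have cpos: "c > 0" using c0 by simp
    define \<epsilon> where "\<epsilon> = c^2/64"
    have \<epsilon>: "\<epsilon> > 0" unfolding \<epsilon>_def using cpos by simp
    have "Inf G < c + \<epsilon>" using \<epsilon> unfolding c_def by simp
    then obtain a where "a \<in> G" "a < c + \<epsilon>" using cInf_lessD[OF Gne] by blast
    then have "good (c + \<epsilon>)" using gmono unfolding G_def by auto
    then obtain L0 where good: "\<forall>L\<ge>L0. \<forall>S. S \<subseteq> {0..<L} \<longrightarrow> \<not> has_3AP S \<longrightarrow> real (card S) \<le> (c + c^2/64) * real L"
      unfolding good_def \<epsilon>_def by blast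
    have "\<not> good (c - \<epsilon>)"
    proof
      assume "good (c - \<epsilon>)"
      then have "c \<le> c - \<epsilon>" unfolding c_def using cInf_lower[OF _ Gbdd] G_def by auto
      with \<epsilon> show False by simp
    qed
    then have bad: "\<forall>N0. \<exists>n\<ge>N0. \<exists>A. A \<subseteq> {0..<n} \<and> \<not> has_3AP A \<and> real (card A) > (c - c^2/64) * n"
      unfolding good_def \<epsilon>_def by (auto simp: not_le)
    show False by (rule roth_main[OF cpos c1 good bad])
  qed
  then have "Inf G < \<delta>" using \<delta> unfolding c_def by simp
  then obtain a where "a \<in> G" "a < \<delta>" using cInf_lessD[OF Gne] by blast
  then have "good \<delta>" using gmono unfolding G_def by auto
  then show ?thesis unfolding good_def by blast
qed



definition Fam :: "nat \<Rightarrow> nat set set" where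
  "Fam m = {S. S \<subseteq> {0..<m} \<and> \<not> has_3AP S}"

lemma has_3AP_mono: "has_3AP S \<Longrightarrow> S \<subseteq> T \<Longrightarrow> has_3AP T"
  unfolding has_3AP_def by blast

lemma finite_Fam: "finite (Fam m)"
proof -
  have "Fam m \<subseteq> Pow {0..<m}" unfolding Fam_def by auto
  then show ?thesis by (rule finite_subset) simp
qed

lemma Fam_mono: "m \<le> m' \<Longrightarrow> card (Fam m) \<le> card (Fam m')"
  by (rule card_mono[OF finite_Fam]) (auto simp: Fam_def)

lemma Fam_mult: "card (Fam (a+b)) \<le> card (Fam a) * card (Fam b)"
proof -
  let ?f = "\<lambda>S. (S \<inter> {0..<a}, (\<lambda>x. x - a) ` (S \<inter> {a..<a+b}))"
  have inj: "inj_on ?f (Fam (a+b))"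
  proof (rule inj_onI)
    fix S T assume S: "S \<in> Fam (a+b)" and T: "T \<in> Fam (a+b)" and e: "?f S = ?f T"
    have *: "\<And>X. X \<subseteq> {0..<a+b} \<Longrightarrow> X = (X \<inter> {0..<a}) \<union> (\<lambda>x. x + a) ` ((\<lambda>x. x - a) ` (X \<inter> {a..<a+b}))"
    proof -
      fix X :: "nat set" assume "X \<subseteq> {0..<a+b}"
      then show "X = (X \<inter> {0..<a}) \<union> (\<lambda>x. x + a) ` ((\<lambda>x. x - a) ` (X \<inter> {a..<a+b}))"
        by (auto simp: image_image)
    qed
    show "S = T" using *[of S] *[of T] S T e unfolding Fam_def by (metis (no_types, lifting) mem_Collect_eq prod.inject)
  qed
  have sub: "?f ` Fam (a+b) \<subseteq> Fam a \<times> Fam b"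
  proof
    fix P assume "P \<in> ?f ` Fam (a+b)"
    then obtain S where S: "S \<in> Fam (a+b)" and P: "P = ?f S" by blast
    have 1: "S \<inter> {0..<a} \<in> Fam a" using S has_3AP_mono[of "S \<inter> {0..<a}" S] unfolding Fam_def by auto
    have "\<not> has_3AP ((\<lambda>x. x - a) ` (S \<inter> {a..<a+b}))"
    proof
      assume "has_3AP ((\<lambda>x. x - a) ` (S \<inter> {a..<a+b}))"
      then obtain x d where "d \<ge> 1" "x \<in> (\<lambda>x. x - a) ` (S \<inter> {a..<a+b})"
        "x + d \<in> (\<lambda>x. x - a) ` (S \<inter> {a..<a+b})" "x + 2*d \<in> (\<lambda>x. x - a) ` (S \<inter> {a..<a+b})"
        unfolding has_3AP_def by blast
      note xd = this
      have im: "\<And>z. z \<in> (\<lambda>x. x - a) ` (S \<inter> {a..<a+b}) \<Longrightarrow> z + a \<in> S" by auto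
      have "x + a \<in> S" using im xd(2) by blast
      moreover have "(x + a) + d \<in> S" using im[OF xd(3)] by (simp add: ac_simps)
      moreover have "(x + a) + 2*d \<in> S" using im[OF xd(4)] by (simp add: ac_simps)
      ultimately have "d \<ge> 1 \<and> x + a \<in> S \<and> (x + a) + d \<in> S \<and> (x+a) + 2*d \<in> S" using xd(1) by blast
      then have "has_3AP S" unfolding has_3AP_def by blast
      then show False using S unfolding Fam_def by blast
    qed
    moreover have "(\<lambda>x. x - a) ` (S \<inter> {a..<a+b}) \<subseteq> {0..<b}" by auto
    ultimately show "P \<in> Fam a \<times> Fam b" using 1 P unfolding Fam_def by auto
  qed
  have "card (Fam (a+b)) = card (?f ` Fam (a+b))" using inj by (simp add: card_image)
  also have "\<dots> \<le> card (Fam a \<times> Fam b)" by (rule card_mono) (auto simp: finite_Fam sub)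
  also have "\<dots> = card (Fam a) * card (Fam b)" by (simp add: card_cartesian_product)
  finally show ?thesis .
qed

lemma Fam_pow: "card (Fam (q*L)) \<le> card (Fam L) ^ q"
proof (induction q)
  case 0
  have "Fam 0 = {{}}" unfolding Fam_def has_3AP_def by auto
  then show ?case by simp
next
  case (Suc q)
  have "card (Fam (Suc q * L)) = card (Fam (L + q*L))" by simp
  also have "\<dots> \<le> card (Fam L) * card (Fam (q*L))" by (rule Fam_mult)
  also have "\<dots> \<le> card (Fam L) * card (Fam L)^q" using Suc.IH by simp
  finally show ?case by simp
qed

lemma Fam_binom:
  assumes "\<forall>S\<in>Fam L. card S \<le> t"
  shows "card (Fam L) \<le> (\<Sum>j\<le>t. L choose j)"
proof -
  have "Fam L \<subseteq> (\<Union>j\<le>t. {S. S \<subseteq> {0..<L} \<and> card S = j})" using assms unfolding Fam_def by auto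
  hence "card (Fam L) \<le> card (\<Union>j\<le>t. {S. S \<subseteq> {0..<L} \<and> card S = j})"
    by (rule card_mono[rotated]) auto
  also have "\<dots> = (\<Sum>j\<le>t. card {S. S \<subseteq> {0..<L} \<and> card S = j})"
    by (rule card_UN_disjoint) auto
  also have "\<dots> = (\<Sum>j\<le>t. L choose j)" by (simp add: n_subsets)
  finally show ?thesis .
qed

lemma binom_sum:
  fixes x :: real
  assumes "0 < x" "x \<le> 1" "t \<le> L"
  shows "(\<Sum>j\<le>t. real (L choose j)) * x^t \<le> (1+x)^L"
proof -
  have "(\<Sum>j\<le>t. real (L choose j)) * x^t = (\<Sum>j\<le>t. real (L choose j) * x^t)" by (simp add: sum_distrib_right)
  also have "\<dots> \<le> (\<Sum>j\<le>t. real (L choose j) * x^j)"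
    by (rule sum_mono) (use assms in \<open>auto intro!: mult_left_mono power_decreasing\<close>)
  also have "\<dots> \<le> (\<Sum>j\<le>L. real (L choose j) * x^j)"
    by (rule sum_mono2) (use assms in auto)
  also have "\<dots> = (x+1)^L" by (simp add: binomial_ring)
  finally show ?thesis by (simp add: add.commute)
qed

lemma small_delta:
  assumes "\<epsilon> > 0"
  shows "\<exists>\<delta>::real. 0 < \<delta> \<and> \<delta> \<le> 1 \<and> ln (1+\<delta>) - \<delta> * ln \<delta> \<le> \<epsilon>"
proof -
  define r where "r = min 1 (\<epsilon>/3)"
  have r: "0 < r" "r \<le> 1" "r \<le> \<epsilon>/3" using assms by (auto simp: r_def)
  have l1: "ln (1 + r^2) \<le> r^2" using r by (intro ln_le_minus_one[THEN order_trans]) (auto intro: add_pos_nonneg)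
  have "ln (1/r) \<le> 1/r - 1" using r by (intro ln_le_minus_one) auto
  hence l2: "- ln r \<le> 1/r - 1" using r by (simp add: ln_div)
  have "ln (r^2) = 2 * ln r" using r by (simp add: ln_realpow)
  hence "ln (1+r^2) - r^2 * ln (r^2) = ln (1+r^2) + 2*r^2 * (- ln r)" by simp
  also have "\<dots> \<le> r^2 + 2*r^2*(1/r - 1)"
  proof -
    have "2*r^2*(- ln r) \<le> 2*r^2*(1/r - 1)" by (rule mult_left_mono[OF l2]) simp
    then show ?thesis using l1 by (rule add_mono[rotated])
  qed
  also have "\<dots> = 2*r - r^2" using r by (simp add: power2_eq_square field_simps)
  also have "\<dots> \<le> \<epsilon>" using r by (simp add: power2_eq_square) (smt (verit) mult_nonneg_nonneg)
  finally show ?thesis using r by (intro exI[of _ "r^2"]) (auto simp: power_le_one)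
qed



lemma Fam_L_bound:
  assumes "\<epsilon> > 0"
  shows "\<exists>L\<ge>1. real (card (Fam L)) \<le> 2 powr (\<epsilon> * L)"
proof -
  have "\<epsilon> * ln 2 > 0" using assms by simp
  then obtain \<delta> :: real where d: "0 < \<delta>" "\<delta> \<le> 1" "ln (1+\<delta>) - \<delta> * ln \<delta> \<le> \<epsilon> * ln 2"
    using small_delta by blast
  obtain L0 where L0: "\<forall>L\<ge>L0. \<forall>S. S \<subseteq> {0..<L} \<longrightarrow> \<not> has_3AP S \<longrightarrow> real (card S) \<le> \<delta> * real L"
    using roth[OF d(1)] by blast
  define L where "L = max L0 1"
  have L: "L \<ge> 1" "L \<ge> L0" by (auto simp: L_def)
  define t where "t = nat \<lfloor>\<delta> * L\<rfloor>"
  have tle: "real t \<le> \<delta> * L" using d by (simp add: t_def)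
  have tL: "t \<le> L"
  proof -
    have "\<delta> * L \<le> L" using d by (simp add: mult_left_le_one_le)
    with tle show ?thesis by linarith
  qed
  have "\<forall>S\<in>Fam L. card S \<le> t"
  proof
    fix S assume "S \<in> Fam L"
    then have "real (card S) \<le> \<delta> * L" using L0 L unfolding Fam_def by blast
    then have "int (card S) \<le> \<lfloor>\<delta> * L\<rfloor>" by (simp add: le_floor_iff)
    then show "card S \<le> t" unfolding t_def by linarith
  qed
  then have c1: "card (Fam L) \<le> (\<Sum>j\<le>t. L choose j)" by (rule Fam_binom)
  have c2: "(\<Sum>j\<le>t. real (L choose j)) * \<delta>^t \<le> (1+\<delta>)^L" by (rule binom_sum[OF d(1) d(2) tL])
  have dt: "\<delta>^t > 0" using d by simp
  have "real (card (Fam L)) \<le> (\<Sum>j\<le>t. real (L choose j))"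
    using c1 by (metis of_nat_le_iff of_nat_sum)
  also have "\<dots> \<le> (1+\<delta>)^L / \<delta>^t" using c2 dt by (simp add: field_simps)
  also have "\<dots> \<le> 2 powr (\<epsilon> * L)"
  proof -
    have pos: "(1+\<delta>)^L / \<delta>^t > 0" using d by simp
    have "ln ((1+\<delta>)^L / \<delta>^t) = L * ln (1+\<delta>) - t * ln \<delta>"
      using d by (simp add: ln_div ln_realpow)
    also have "\<dots> \<le> L * ln (1+\<delta>) - (\<delta> * L) * ln \<delta>"
    proof -
      have "ln \<delta> \<le> 0" using d by simp
      then have "(\<delta> * L) * ln \<delta> \<le> t * ln \<delta>" using mult_right_mono_neg[OF tle] by blast
      then show ?thesis by linarith
    qed
    also have "\<dots> = L * (ln (1+\<delta>) - \<delta> * ln \<delta>)" by (simp add: algebra_simps)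
    also have "\<dots> \<le> L * (\<epsilon> * ln 2)" using d(3) by (rule mult_left_mono) simp
    also have "\<dots> = ln (2 powr (\<epsilon> * L))" by (simp add: ln_powr)
    finally have "ln ((1+\<delta>)^L / \<delta>^t) \<le> ln (2 powr (\<epsilon> * L))" .
    then show ?thesis using pos by (subst (asm) ln_le_cancel_iff) auto
  qed
  finally show ?thesis using L by blast
qed

lemma count_bound:
  assumes "\<epsilon> > 0"
  shows "\<exists>C>0. \<forall>m. real (card (Fam m)) \<le> C * 2 powr (\<epsilon> * m)"
proof -
  obtain L where L: "L \<ge> 1" "real (card (Fam L)) \<le> 2 powr (\<epsilon> * L)" using Fam_L_bound[OF assms] by blast
  have "real (card (Fam m)) \<le> 2 powr (\<epsilon> * L) * 2 powr (\<epsilon> * m)" for m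
  proof -
    define q where "q = m div L + 1"
    have qe: "q * L = m div L * L + L" by (simp add: q_def)
    have d1: "m div L * L + m mod L = m" by (rule div_mult_mod_eq)
    have d2: "m mod L < L" using L(1) by simp
    have mq: "m \<le> q * L" using qe d1 d2 by linarith
    have "q * L \<le> m + L" using qe d1 by linarith
    then have qL: "real (q * L) \<le> real m + L" by (metis of_nat_add of_nat_le_iff)
    have "card (Fam m) \<le> card (Fam L) ^ q" using Fam_mono[OF mq] Fam_pow[of q L] by linarith
    then have "real (card (Fam m)) \<le> real (card (Fam L)) ^ q" by (metis of_nat_le_iff of_nat_power)
    also have "\<dots> \<le> (2 powr (\<epsilon> * L)) ^ q" using L(2) by (intro power_mono) auto
    also have "\<dots> = 2 powr (\<epsilon> * real (q * L))" by (simp add: powr_power algebra_simps)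
    also have "\<dots> \<le> 2 powr (\<epsilon> * (real m + L))" using qL assms by (intro powr_mono) auto
    also have "\<dots> = 2 powr (\<epsilon> * L) * 2 powr (\<epsilon> * m)" by (simp add: algebra_simps powr_add)
    finally show ?thesis .
  qed
  then show ?thesis by (intro exI[of _ "2 powr (\<epsilon> * L)"]) auto
qed

lemma le_two_pow: "n \<le> (2::nat)^n"
proof (induction n)
  case (Suc n)
  have "1 \<le> (2::nat)^n" by simp
  then have "n + 1 \<le> 2^n + 2^n" using Suc.IH by linarith
  then show ?case by simp
qed simp

theorem theorem6p2:
  fixes \<epsilon> :: real
  assumes "\<epsilon> > 0"
  shows "\<exists>C. \<forall>N::nat. N \<ge> 1 \<longrightarrow> real (card (W_set \<inter> {1..N})) \<le> C * real N powr \<epsilon>"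
proof -
  obtain C where C: "C > 0" "\<And>m. real (card (Fam m)) \<le> C * 2 powr (\<epsilon> * m)"
    using count_bound[OF assms] by blast
  have "real (card (W_set \<inter> {1..N})) \<le> (C * 8 powr \<epsilon>) * real N powr \<epsilon>" if N: "N \<ge> 1" for N :: nat
  proof -
    define a where "a = (LEAST a. N \<le> 2^a)"
    have ex: "N \<le> 2^N" by (rule le_two_pow)
    have a1: "N \<le> 2^a" unfolding a_def by (rule LeastI[of _ N]) (rule ex)
    have a2: "2^a < 2 * N"
    proof (cases a)
      case 0 then show ?thesis using N by simp
    next
      case (Suc b)
      have "b < (LEAST a. N \<le> 2^a)" using Suc unfolding a_def[symmetric] by simp
      then have "\<not> N \<le> 2^b" by (rule not_less_Least)
      then show ?thesis using Suc by simp
    qed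
    let ?f = "\<lambda>k. A_set k \<inter> {0..<a+2}"
    have inj: "inj_on ?f (W_set \<inter> {1..N})"
    proof (rule inj_onI)
      fix k k' assume k: "k \<in> W_set \<inter> {1..N}" and k': "k' \<in> W_set \<inter> {1..N}" and e: "?f k = ?f k'"
      show "k = k'"
      proof (rule ccontr)
        assume "k \<noteq> k'"
        then consider "k < k'" | "k' < k" by linarith
        then show False
        proof cases
          case 1
          have "k' - k < 2^a" using k k' a1 by auto
          then show False using pattern_inj[OF 1 _ e] by blast
        next
          case 2
          have "k - k' < 2^a" using k k' a1 by auto
          then show False using pattern_inj[OF 2 _ e[symmetric]] by blast
        qed
      qed
    qed
    have img: "?f ` (W_set \<inter> {1..N}) \<subseteq> Fam (a+2)"
    proof
      fix S assume "S \<in> ?f ` (W_set \<inter> {1..N})"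
      then obtain k where k: "k \<in> W_set" "S = A_set k \<inter> {0..<a+2}" by blast
      have "\<not> has_3AP (A_set k)" using k(1) unfolding W_set_def by blast
      then have "\<not> has_3AP S" using k(2) has_3AP_mono[of S "A_set k"] by blast
      then show "S \<in> Fam (a+2)" using k(2) unfolding Fam_def by blast
    qed
    have "card (W_set \<inter> {1..N}) \<le> card (Fam (a+2))"
      by (rule card_inj_on_le[OF inj img finite_Fam])
    then have "real (card (W_set \<inter> {1..N})) \<le> C * 2 powr (\<epsilon> * real (a+2))"
      using C(2)[of "a+2"] by linarith
    also have "2 powr (\<epsilon> * real (a+2)) = (2 powr real (a+2)) powr \<epsilon>"
      by (simp add: powr_powr mult.commute)
    also have "2 powr real (a+2) = real (2^(a+2))" using powr_realpow[of 2 "a+2"] by simp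
    also have "real (2^(a+2)) powr \<epsilon> \<le> (8 * real N) powr \<epsilon>"
    proof -
      have "(2::nat)^(a+2) \<le> 8 * N" using a2 by (simp add: power_add)
      then have "real (2^(a+2)) \<le> 8 * real N" by (metis of_nat_le_iff of_nat_mult of_nat_numeral)
      then show ?thesis using assms by (intro powr_mono2) auto
    qed
    also have "(8 * real N) powr \<epsilon> = 8 powr \<epsilon> * real N powr \<epsilon>" by (simp add: powr_mult)
    finally show ?thesis using C(1) by (simp add: mult.assoc mult_left_mono)
  qed
  then show ?thesis by blast
qed


end
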